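(* Let $f:\{0,1\}^n\to\{0,1\}^m$ be a fully balanced function and $r=\dim\operatorname{img}(f)$. Consider the procedure: set $C=B=\varnothing$. While $\langle C\cup B\rangle\neq\{0,1\}^m$: choose $\mathbf{y}\in\{0,1\}^m\setminus\langle C\cup B\rangle$ and query $\mathbf{y}$. If $\mathbf{y}\in C(f)$, add $\mathbf{y}$ to $C$. Otherwise, if $B=\varnothing$, add $\mathbf{y}$ to $B$; if $B\neq\varnothing$, go through the elements $\mathbf{s}\in B$ one at a time, querying $\mathbf{y}_{\mathbf{s}}=\mathbf{s}\oplus\mathbf{y}$: at the first $\mathbf{s}$ with $\mathbf{y}_{\mathbf{s}}\in C(f)$, add $\mathbf{y}_{\mathbf{s}}$ to $C$ and stop going through $B$; if $\mathbf{y}_{\mathbf{s}}\notin C(f)$ for all $\mathbf{s}\in B$, add $\mathbf{y}$ and all the $\mathbf{y}_{\mathbf{s}}$ ($\mathbf{s}\in B$) to $B$. Then the procedure terminates, at termination $\#C=m-r$ (so $r$ is determined with certainty, and $C$ is a basis of $C(f)$) and $\#B=2^r-1$, and the total number of oracle queries is at most $2^r(m-r+1)-1$.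
   Context: Strings in $\{0,1\}^k$ are identified with vectors of $\mathbb{F}_2^k$; $\oplus$ is bitwise addition mod 2; $\mathbf{a}\cdot\mathbf{b}=\bigoplus_i a_ib_i$; $\langle X\rangle$ is the linear span of $X$. $f$ is $\mathbf{y}$-balanced if $f(\mathbf{x})\cdot\mathbf{y}=0$ for exactly half of the $\mathbf{x}$ and $=1$ for the other half, and $\mathbf{y}$-constant if $f(\mathbf{x})\cdot\mathbf{y}$ is the same for all $\mathbf{x}$. $f$ is fully balanced if for every $\mathbf{y}$ it is $\mathbf{y}$-balanced or $\mathbf{y}$-constant; then $\operatorname{img}(f)$ is an affine subspace. $C(f)=\{\mathbf{y}: f\text{ is }\mathbf{y}\text{-constant}\}$. A query on $\mathbf{y}$ reports whether $\mathbf{y}\in C(f)$ (one run of the Generalised Phase Kick-Back algorithm with marker $\mathbf{y}$, whose output is $\mathbf{0}$ exactly when $f$ is $\mathbf{y}$-constant, for fully balanced $f$). *)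

theory Defs
  imports Main
begin

text \<open>Bit strings of length k are bool lists of length k (True = 1), viewed as vectors of F_2^k.\<close>

definition vecs :: "nat \<Rightarrow> bool list set" where
  "vecs k = {xs. length xs = k}"

definition vxor :: "bool list \<Rightarrow> bool list \<Rightarrow> bool list" where
  "vxor xs ys = map2 (\<lambda>a b. a \<noteq> b) xs ys"

definition vdot :: "bool list \<Rightarrow> bool list \<Rightarrow> bool" where
  "vdot xs ys = odd (length (filter (\<lambda>(a, b). a \<and> b) (zip xs ys)))"

inductive_set span2 :: "nat \<Rightarrow> bool list set \<Rightarrow> bool list set" for m X where
  zero: "replicate m False \<in> span2 m X"
| add: "x \<in> X \<Longrightarrow> v \<in> span2 m X \<Longrightarrow> vxor x v \<in> span2 m X"

definition lin_indep2 :: "nat \<Rightarrow> bool list set \<Rightarrow> bool" where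
  "lin_indep2 m B = (\<forall>b\<in>B. b \<notin> span2 m (B - {b}))"

definition vdim2 :: "nat \<Rightarrow> bool list set \<Rightarrow> nat" where
  "vdim2 m V = (LEAST k. \<exists>B\<subseteq>V. finite B \<and> card B = k \<and> span2 m B = span2 m V)"

definition affine_dim2 :: "nat \<Rightarrow> bool list set \<Rightarrow> nat" where
  "affine_dim2 m A = vdim2 m {vxor a b | a b. a \<in> A \<and> b \<in> A}"

definition y_balanced :: "nat \<Rightarrow> (bool list \<Rightarrow> bool list) \<Rightarrow> bool list \<Rightarrow> bool" where
  "y_balanced n f y =
     (card {x \<in> vecs n. \<not> vdot (f x) y} = card {x \<in> vecs n. vdot (f x) y})"

definition y_constant :: "nat \<Rightarrow> (bool list \<Rightarrow> bool list) \<Rightarrow> bool list \<Rightarrow> bool" where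
  "y_constant n f y = (\<forall>x\<in>vecs n. \<forall>x'\<in>vecs n. vdot (f x) y = vdot (f x') y)"

definition fully_balanced :: "nat \<Rightarrow> nat \<Rightarrow> (bool list \<Rightarrow> bool list) \<Rightarrow> bool" where
  "fully_balanced n m f = (\<forall>y\<in>vecs m. y_balanced n f y \<or> y_constant n f y)"

definition constant_set :: "nat \<Rightarrow> nat \<Rightarrow> (bool list \<Rightarrow> bool list) \<Rightarrow> bool list set" where
  "constant_set n m f = {y \<in> vecs m. y_constant n f y}"

text \<open>One iteration of the while loop of the procedure. A state is (C, B, number of queries so far);
  Q is the set answered positively by a query (Q = C(f)). Choices of y and of the order in
  which B is traversed are nondeterministic.\<close>
inductive gpk_step :: "nat \<Rightarrow> bool list set \<Rightarrow> bool list set \<times> bool list set \<times> nat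
                        \<Rightarrow> bool list set \<times> bool list set \<times> nat \<Rightarrow> bool" for m Q where
  in_C: "span2 m (C \<union> B) \<noteq> vecs m \<Longrightarrow> y \<in> vecs m - span2 m (C \<union> B) \<Longrightarrow> y \<in> Q
     \<Longrightarrow> gpk_step m Q (C, B, q) (insert y C, B, q + 1)"
| B_empty: "span2 m (C \<union> B) \<noteq> vecs m \<Longrightarrow> y \<in> vecs m - span2 m (C \<union> B) \<Longrightarrow> y \<notin> Q
     \<Longrightarrow> B = {} \<Longrightarrow> gpk_step m Q (C, B, q) (C, {y}, q + 1)"
| found: "span2 m (C \<union> B) \<noteq> vecs m \<Longrightarrow> y \<in> vecs m - span2 m (C \<union> B) \<Longrightarrow> y \<notin> Q
     \<Longrightarrow> B \<noteq> {} \<Longrightarrow> distinct ss \<Longrightarrow> set ss = B \<Longrightarrow> j < length ss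
     \<Longrightarrow> (\<forall>i<j. vxor (ss ! i) y \<notin> Q) \<Longrightarrow> vxor (ss ! j) y \<in> Q
     \<Longrightarrow> gpk_step m Q (C, B, q) (insert (vxor (ss ! j) y) C, B, q + 1 + Suc j)"
| none: "span2 m (C \<union> B) \<noteq> vecs m \<Longrightarrow> y \<in> vecs m - span2 m (C \<union> B) \<Longrightarrow> y \<notin> Q
     \<Longrightarrow> B \<noteq> {} \<Longrightarrow> (\<forall>s\<in>B. vxor s y \<notin> Q)
     \<Longrightarrow> gpk_step m Q (C, B, q) (C, B \<union> insert y ((\<lambda>s. vxor s y) ` B), q + 1 + card B)"

end

theory Submission
  imports Defs
begin

abbreviation zv :: "nat \<Rightarrow> bool list" where "zv m \<equiv> replicate m False"

lemma vxor_simps[simp]: "vxor [] ys = []" "vxor xs [] = []"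
  "vxor (x#xs) (y#ys) = (x \<noteq> y) # vxor xs ys"
  by (auto simp: vxor_def)

lemma length_vxor[simp]: "length (vxor xs ys) = min (length xs) (length ys)"
  by (simp add: vxor_def)

lemma vxor_comm: "vxor xs ys = vxor ys xs"
  apply (induction xs arbitrary: ys) apply simp apply (case_tac ys) by auto

lemma vxor_assoc: "vxor (vxor xs ys) zs = vxor xs (vxor ys zs)"
  apply (induction xs arbitrary: ys zs) apply simp apply (case_tac ys; case_tac zs) by auto

lemma vxor_self: "vxor xs xs = zv (length xs)"
  by (induction xs) auto

lemma vxor_zero: "length xs = n \<Longrightarrow> vxor (zv n) xs = xs"
  by (induction xs arbitrary: n) auto

lemma vxor_zero2: "length xs = n \<Longrightarrow> vxor xs (zv n) = xs"
  using vxor_zero vxor_comm by metis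

lemma vxor_cancel: "length x = length y \<Longrightarrow> vxor x (vxor x y) = y"
  by (metis vxor_assoc vxor_self vxor_zero)

lemma vecs_finite: "finite (vecs m)"
proof -
  have "vecs m = {xs. set xs \<subseteq> UNIV \<and> length xs = m}" by (auto simp: vecs_def)
  thus ?thesis using finite_lists_length_eq[of "UNIV::bool set" m] by simp
qed

lemma card_vecs: "card (vecs m) = 2 ^ m"
proof -
  have "vecs m = {xs. set xs \<subseteq> UNIV \<and> length xs = m}" by (auto simp: vecs_def)
  thus ?thesis using card_lists_length_eq[of "UNIV::bool set" m] by (simp add: card_UNIV_bool)
qed

lemma vdot_simps[simp]: "vdot [] ys = False" "vdot xs [] = False"
  "vdot (x#xs) (y#ys) = ((x \<and> y) \<noteq> vdot xs ys)"
  by (auto simp: vdot_def)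

lemma vdot_comm: "vdot xs ys = vdot ys xs"
  apply (induction xs arbitrary: ys) apply simp apply (case_tac ys) by auto

lemma vdot_zero[simp]: "vdot (zv n) ys = False"
  apply (induction n arbitrary: ys) apply simp apply (case_tac ys) by auto

lemma vdot_lin: "length a = length b \<Longrightarrow> vdot (vxor a b) y = (vdot a y \<noteq> vdot b y)"
  apply (induction a arbitrary: b y) apply simp apply (case_tac b; case_tac y) by auto

lemma vdot_lin2: "length a = length b \<Longrightarrow> vdot y (vxor a b) = (vdot y a \<noteq> vdot y b)"
  using vdot_lin vdot_comm by metis

lemma mem_vecs[simp]: "x \<in> vecs m \<longleftrightarrow> length x = m" by (simp add: vecs_def)

lemma span_vecs: assumes "X \<subseteq> vecs m" shows "span2 m X \<subseteq> vecs m"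
proof
  fix v assume "v \<in> span2 m X" thus "v \<in> vecs m"
    by (induction rule: span2.induct) (use assms in auto)
qed

lemma span_zero: "zv m \<in> span2 m X" by (rule span2.zero)

lemma span_base: "X \<subseteq> vecs m \<Longrightarrow> x \<in> X \<Longrightarrow> x \<in> span2 m X"
  using span2.add[OF _ span2.zero, of x X m] vxor_zero2[of x m] by (auto simp: vecs_def)

lemma span_closed: assumes "X \<subseteq> vecs m" "u \<in> span2 m X" "v \<in> span2 m X"
  shows "vxor u v \<in> span2 m X"
  using assms(2)
proof (induction rule: span2.induct)
  case zero then show ?case using vxor_zero[of v m] span_vecs[OF assms(1)] assms(3) by force
next
  case (add x w) then show ?case by (simp add: vxor_assoc span2.add)
qed

lemma span_min: assumes "X \<subseteq> W" "zv m \<in> W" "\<And>u v. u \<in> W \<Longrightarrow> v \<in> W \<Longrightarrow> vxor u v \<in> W"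
  shows "span2 m X \<subseteq> W"
proof
  fix v assume "v \<in> span2 m X" thus "v \<in> W"
    by (induction rule: span2.induct) (use assms in auto)
qed

lemma span_mono: assumes "X \<subseteq> Y" shows "span2 m X \<subseteq> span2 m Y"
proof
  fix v assume "v \<in> span2 m X" thus "v \<in> span2 m Y"
    by (induction rule: span2.induct) (use assms in \<open>auto intro: span2.intros\<close>)
qed

lemma span_sub: "Y \<subseteq> vecs m \<Longrightarrow> X \<subseteq> span2 m Y \<Longrightarrow> span2 m X \<subseteq> span2 m Y"
  by (rule span_min) (auto intro: span_closed span2.zero)

lemma span_insert: assumes "X \<subseteq> vecs m" "y \<in> vecs m"
  shows "span2 m (insert y X) = span2 m X \<union> vxor y ` span2 m X"
proof
  show "span2 m (insert y X) \<subseteq> span2 m X \<union> vxor y ` span2 m X"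
  proof
    fix v assume "v \<in> span2 m (insert y X)"
    thus "v \<in> span2 m X \<union> vxor y ` span2 m X"
    proof (induction rule: span2.induct)
      case zero then show ?case by (simp add: span2.zero)
    next
      case (add x v)
      have sv: "span2 m X \<subseteq> vecs m" using span_vecs assms by auto
      from add.IH show ?case
      proof
        assume v: "v \<in> span2 m X"
        show ?thesis
        proof (cases "x = y")
          case True then show ?thesis using v by auto
        next
          case False then show ?thesis using v add.hyps(1) by (auto intro: span2.add)
        qed
      next
        assume "v \<in> vxor y ` span2 m X"
        then obtain w where w: "w \<in> span2 m X" "v = vxor y w" by auto
        show ?thesis
        proof (cases "x = y")
          case True then show ?thesis using w sv assms(2) vxor_cancel[of y w] by force
        next
          case False
          then have "x \<in> X" using add.hyps(1) by auto
          then have "vxor x w \<in> span2 m X" using w by (auto intro: span2.add)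
          moreover have "vxor x v = vxor y (vxor x w)" using w
            by (metis vxor_assoc vxor_comm)
          ultimately show ?thesis by auto
        qed
      qed
    qed
  qed
next
  have "insert y X \<subseteq> vecs m" using assms by auto
  moreover have "span2 m X \<subseteq> span2 m (insert y X)" by (rule span_mono) auto
  moreover have "vxor y v \<in> span2 m (insert y X)" if "v \<in> span2 m (insert y X)" for v
    using that by (auto intro: span2.add)
  ultimately show "span2 m X \<union> vxor y ` span2 m X \<subseteq> span2 m (insert y X)" by auto
qed


lemma inj_vxor: "length y = m \<Longrightarrow> inj_on (vxor y) (vecs m)"
  by (rule inj_on_inverseI[where g="vxor y"]) (simp add: vxor_cancel)

lemma finite_span: "X \<subseteq> vecs m \<Longrightarrow> finite (span2 m X)"
  by (rule finite_subset[OF span_vecs vecs_finite])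

lemma card_span_insert:
  assumes X: "X \<subseteq> vecs m" and y: "length y = m" and ny: "y \<notin> span2 m X"
  shows "card (span2 m (insert y X)) = 2 * card (span2 m X)"
proof -
  have sv: "span2 m X \<subseteq> vecs m" using span_vecs X by auto
  have fin: "finite (span2 m X)" using finite_span X by auto
  have disj: "span2 m X \<inter> vxor y ` span2 m X = {}"
  proof (rule ccontr)
    assume "span2 m X \<inter> vxor y ` span2 m X \<noteq> {}"
    then obtain s where s: "s \<in> span2 m X" "vxor y s \<in> span2 m X" by auto
    then have "vxor (vxor y s) s \<in> span2 m X" using span_closed X by blast
    moreover have "length s = m" using s sv by auto
    then have "vxor (vxor y s) s = y" using y by (simp add: vxor_assoc vxor_self vxor_zero2)
    ultimately show False using ny by simp
  qed
  have "card (vxor y ` span2 m X) = card (span2 m X)"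
    using card_image inj_on_subset[OF inj_vxor[OF y] sv] by blast
  then show ?thesis
    using span_insert[OF X] y card_Un_disjoint[OF fin _ disj] fin by simp
qed

lemma card_span_insert_le:
  assumes X: "X \<subseteq> vecs m" and y: "length y = m"
  shows "card (span2 m (insert y X)) \<le> 2 * card (span2 m X)"
proof -
  have fin: "finite (span2 m X)" using finite_span X by auto
  have "card (span2 m X \<union> vxor y ` span2 m X) \<le> card (span2 m X) + card (vxor y ` span2 m X)"
    by (rule card_Un_le)
  also have "\<dots> \<le> 2 * card (span2 m X)" using card_image_le[OF fin, of "vxor y"] by simp
  finally show ?thesis using span_insert[OF X] y by simp
qed

lemma span_absorb: assumes "V \<subseteq> vecs m" "x \<in> span2 m V"
  shows "span2 m (insert x V) = span2 m V"
proof
  have "insert x V \<subseteq> span2 m V" using assms span_base by blast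
  then show "span2 m (insert x V) \<subseteq> span2 m V" using span_sub assms by blast
  show "span2 m V \<subseteq> span2 m (insert x V)" by (rule span_mono) auto
qed

lemma card_span_le: "finite X \<Longrightarrow> X \<subseteq> vecs m \<Longrightarrow> card (span2 m X) \<le> 2 ^ card X"
proof (induction X rule: finite_induct)
  case empty
  have "span2 m {} = {zv m}"
    using span_min[of "{}" "{zv m}" m] span_zero[of m "{}"] by (auto simp: vxor_self)
  then show ?case by simp
next
  case (insert x F)
  have "card (span2 m (insert x F)) \<le> 2 * card (span2 m F)"
    using card_span_insert_le insert by auto
  also have "\<dots> \<le> 2 * 2 ^ card F" using insert by auto
  finally show ?case using insert by simp
qed

lemma span_empty: "span2 m {} = {zv m}"
  using span_min[of "{}" "{zv m}" m] span_zero[of m "{}"] by (auto simp: vxor_self)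

lemma basis_exists: "finite V \<Longrightarrow> V \<subseteq> vecs m \<Longrightarrow>
   \<exists>B\<subseteq>V. card (span2 m B) = 2 ^ card B \<and> span2 m B = span2 m V"
proof (induction V rule: finite_induct)
  case empty then show ?case by (auto simp: span_empty)
next
  case (insert x F)
  then obtain B where B: "B \<subseteq> F" "card (span2 m B) = 2 ^ card B" "span2 m B = span2 m F" by auto
  have BF: "finite B" using B insert finite_subset by auto
  show ?case
  proof (cases "x \<in> span2 m F")
    case True
    have FV: "F \<subseteq> vecs m" using insert.prems by auto
    have "span2 m (insert x F) = span2 m F" using span_absorb[OF FV True] .
    then show ?thesis using B by (intro exI[of _ B]) auto
  next
    case False
    have FV: "F \<subseteq> vecs m" and xV: "length x = m" using insert.prems by auto
    have BV: "B \<subseteq> vecs m" using FV B(1) by auto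
    have xB: "x \<notin> B" using insert.hyps(2) B(1) by auto
    have nx: "x \<notin> span2 m B" using False B(3) by simp
    have "card (span2 m (insert x B)) = 2 * card (span2 m B)"
      using card_span_insert[OF BV xV nx] .
    moreover have "span2 m (insert x B) = span2 m (insert x F)"
      using span_insert[OF BV] span_insert[OF FV] xV B(3) by simp
    moreover have "card (insert x B) = Suc (card B)" using xB BF by simp
    ultimately show ?thesis using B by (intro exI[of _ "insert x B"]) auto
  qed
qed

lemma vdim2_eq: assumes V: "V \<subseteq> vecs m" and c: "card (span2 m V) = 2 ^ d"
  shows "vdim2 m V = d"
  unfolding vdim2_def
proof (rule Least_equality)
  have fV: "finite V" using V vecs_finite finite_subset by auto
  obtain B where B: "B \<subseteq> V" "card (span2 m B) = 2 ^ card B" "span2 m B = span2 m V"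
    using basis_exists[OF fV V] by auto
  then have "card B = d" using c by simp
  then show "\<exists>B\<subseteq>V. finite B \<and> card B = d \<and> span2 m B = span2 m V"
    using B fV finite_subset by blast
next
  fix k assume "\<exists>B\<subseteq>V. finite B \<and> card B = k \<and> span2 m B = span2 m V"
  then obtain B where B: "B \<subseteq> V" "finite B" "card B = k" "span2 m B = span2 m V" by auto
  have BV: "B \<subseteq> vecs m" using B(1) V by auto
  have "card (span2 m B) \<le> 2 ^ card B" using card_span_le[OF B(2) BV] .
  then have "(2::nat) ^ d \<le> 2 ^ k" using B(3,4) c by simp
  then show "d \<le> k" using power_le_imp_le_exp[of 2 d k] by simp
qed

lemma indep_of_card: assumes C: "finite C" "C \<subseteq> vecs m" and c: "card (span2 m C) = 2 ^ card C"
  shows "lin_indep2 m C"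
  unfolding lin_indep2_def
proof
  fix b assume b: "b \<in> C"
  show "b \<notin> span2 m (C - {b})"
  proof
    assume "b \<in> span2 m (C - {b})"
    moreover have "C - {b} \<subseteq> vecs m" using C by auto
    ultimately have "span2 m (insert b (C - {b})) = span2 m (C - {b})"
      using span_absorb[of "C - {b}" m b] by blast
    moreover have "insert b (C - {b}) = C" using b by auto
    ultimately have "span2 m C = span2 m (C - {b})" by simp
    then have "card (span2 m C) \<le> 2 ^ card (C - {b})"
      using card_span_le[of "C - {b}" m] C by auto
    also have "\<dots> < 2 ^ card C" using b C card_Diff1_less[of C b] by simp
    finally show False using c by simp
  qed
qed

lemma span_union: assumes X: "X \<subseteq> vecs m" and Y: "Y \<subseteq> vecs m" and v: "v \<in> span2 m (X \<union> Y)"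
  shows "\<exists>a\<in>span2 m X. \<exists>b\<in>span2 m Y. v = vxor a b"
  using v
proof (induction rule: span2.induct)
  case zero
  have "zv m = vxor (zv m) (zv m)" by (simp add: vxor_self)
  then show ?case using span_zero[of m] by blast
next
  case (add x v)
  then obtain a b where ab: "a \<in> span2 m X" "b \<in> span2 m Y" "v = vxor a b" by auto
  show ?case
  proof (cases "x \<in> X")
    case True
    then have "vxor x a \<in> span2 m X" using ab by (auto intro: span2.add)
    moreover have "vxor x v = vxor (vxor x a) b" by (simp add: ab vxor_assoc)
    ultimately show ?thesis using ab by blast
  next
    case False
    then have "x \<in> Y" using add by auto
    then have "vxor x b \<in> span2 m Y" using ab by (auto intro: span2.add)
    moreover have "vxor x v = vxor a (vxor x b)"
    proof -
      have "vxor x v = vxor (vxor x a) b" by (simp add: ab vxor_assoc)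
      also have "\<dots> = vxor (vxor a x) b" by (simp add: vxor_comm[of x a])
      finally show ?thesis by (simp add: vxor_assoc)
    qed
    ultimately show ?thesis using ab by auto
  qed
qed


definition perp :: "nat \<Rightarrow> bool list set \<Rightarrow> bool list set" where
  "perp m W = {y \<in> vecs m. \<forall>w\<in>W. \<not> vdot w y}"

definition sg :: "bool list \<Rightarrow> bool list \<Rightarrow> int" where
  "sg w y = (if vdot w y then -1 else 1)"

lemma inv_sum:
  assumes A: "finite A" and g: "\<And>a. a \<in> A \<Longrightarrow> g a \<in> A" "\<And>a. a \<in> A \<Longrightarrow> g (g a) = a"
    and s: "\<And>a. a \<in> A \<Longrightarrow> s (g a) = - (s a :: int)"
  shows "sum s A = 0"
proof -
  have bij: "bij_betw g A A"
    by (rule bij_betw_byWitness[where f'=g]) (use g in auto)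
  have "sum s A = sum (s \<circ> g) A" using sum.reindex_bij_betw[OF bij, of s] by simp
  also have "\<dots> = sum (\<lambda>a. - s a) A" by (rule sum.cong) (use s in auto)
  also have "\<dots> = - sum s A" by (simp add: sum_negf)
  finally show ?thesis by simp
qed

lemma vdot_zero2[simp]: "vdot ys (zv n) = False"
  using vdot_zero vdot_comm by metis

lemma nonzero_witness: "length w = m \<Longrightarrow> w \<noteq> zv m \<Longrightarrow> \<exists>u. length u = m \<and> vdot w u"
proof (induction w arbitrary: m)
  case Nil then show ?case by simp
next
  case (Cons a w)
  then obtain k where k: "m = Suc k" "length w = k" by auto
  show ?case
  proof (cases a)
    case True
    then show ?thesis using k by (intro exI[of _ "True # zv k"]) simp
  next
    case False
    then have "w \<noteq> zv k" using Cons.prems k by auto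
    then obtain u where "length u = k" "vdot w u" using Cons.IH k by blast
    then show ?thesis using False k by (intro exI[of _ "False # u"]) simp
  qed
qed

lemma sum_y: assumes w: "length w = m"
  shows "(\<Sum>y\<in>vecs m. sg w y) = (if w = zv m then 2 ^ m else 0)"
proof (cases "w = zv m")
  case True
  then show ?thesis by (simp add: sg_def card_vecs)
next
  case False
  then obtain u where u: "length u = m" "vdot w u" using nonzero_witness w by blast
  have "(\<Sum>y\<in>vecs m. sg w y) = 0"
  proof (rule inv_sum[where g="vxor u"])
    show "finite (vecs m)" by (rule vecs_finite)
    fix y assume y: "y \<in> vecs m"
    then show "vxor u y \<in> vecs m" using u by simp
    show "vxor u (vxor u y) = y" using y u by (simp add: vxor_cancel)
    have "vdot w (vxor u y) = (vdot w u \<noteq> vdot w y)" using vdot_lin2 y u by simp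
    then show "sg w (vxor u y) = - sg w y" using u by (simp add: sg_def)
  qed
  then show ?thesis using False by simp
qed

lemma sum_w: assumes X: "X \<subseteq> vecs m" and y: "length y = m"
  shows "(\<Sum>w\<in>span2 m X. sg w y) = (if y \<in> perp m (span2 m X) then int (card (span2 m X)) else 0)"
proof (cases "y \<in> perp m (span2 m X)")
  case True
  then have "(\<Sum>w\<in>span2 m X. sg w y) = (\<Sum>w\<in>span2 m X. 1)"
    by (intro sum.cong) (auto simp: perp_def sg_def)
  then show ?thesis using True by simp
next
  case False
  then obtain w0 where w0: "w0 \<in> span2 m X" "vdot w0 y" using y by (auto simp: perp_def)
  have sv: "span2 m X \<subseteq> vecs m" using span_vecs X by auto
  have "(\<Sum>w\<in>span2 m X. sg w y) = 0"
  proof (rule inv_sum[where g="vxor w0"])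
    show "finite (span2 m X)" using finite_span X by auto
    fix w assume w: "w \<in> span2 m X"
    then show "vxor w0 w \<in> span2 m X" using w0 span_closed X by auto
    have l: "length w = m" "length w0 = m" using w w0 sv by auto
    then show "vxor w0 (vxor w0 w) = w" by (simp add: vxor_cancel)
    have "vdot (vxor w0 w) y = (vdot w0 y \<noteq> vdot w y)" using vdot_lin l by simp
    then show "sg (vxor w0 w) y = - sg w y" using w0 by (simp add: sg_def)
  qed
  then show ?thesis using False by simp
qed

lemma duality: assumes X: "X \<subseteq> vecs m"
  shows "card (span2 m X) * card (perp m (span2 m X)) = 2 ^ m"
proof -
  let ?W = "span2 m X"
  have sv: "?W \<subseteq> vecs m" using span_vecs X by auto
  have fW: "finite ?W" using finite_span X by auto
  have "(\<Sum>w\<in>?W. \<Sum>y\<in>vecs m. sg w y) = (\<Sum>w\<in>?W. if w = zv m then 2 ^ m else 0)"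
  proof (rule sum.cong)
    fix w assume "w \<in> ?W"
    then have "length w = m" using sv by auto
    then show "(\<Sum>y\<in>vecs m. sg w y) = (if w = zv m then 2 ^ m else 0)" by (rule sum_y)
  qed simp
  also have "\<dots> = 2 ^ m" using fW span_zero[of m X] by (simp add: sum.delta)
  finally have 1: "(\<Sum>w\<in>?W. \<Sum>y\<in>vecs m. sg w y) = 2 ^ m" .
  have "(\<Sum>w\<in>?W. \<Sum>y\<in>vecs m. sg w y) = (\<Sum>y\<in>vecs m. \<Sum>w\<in>?W. sg w y)"
    by (rule sum.swap)
  also have "\<dots> = (\<Sum>y\<in>vecs m. if y \<in> perp m ?W then int (card ?W) else 0)"
    by (rule sum.cong) (use sum_w X in auto)
  also have "\<dots> = (\<Sum>y\<in>perp m ?W. int (card ?W))"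
  proof -
    have "vecs m \<inter> perp m ?W = perp m ?W" by (auto simp: perp_def)
    then show ?thesis using sum.inter_restrict[OF vecs_finite, of "\<lambda>_. int (card ?W)" m "perp m ?W"]
      by simp
  qed
  also have "\<dots> = int (card ?W) * int (card (perp m ?W))" by simp
  finally have "int (card ?W * card (perp m ?W)) = int (2 ^ m)" using 1 by simp
  then show ?thesis by (simp only: of_nat_eq_iff)
qed


definition subsp :: "nat \<Rightarrow> bool list set \<Rightarrow> bool" where
  "subsp m Q = (Q \<subseteq> vecs m \<and> zv m \<in> Q \<and> (\<forall>a\<in>Q. \<forall>b\<in>Q. vxor a b \<in> Q))"

definition ginv :: "nat \<Rightarrow> bool list set \<Rightarrow> bool list set \<times> bool list set \<times> nat \<Rightarrow> bool" where
  "ginv m Q s = (case s of (C, B, q) \<Rightarrow>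
     C \<subseteq> Q \<and> finite C \<and> B \<subseteq> vecs m \<and> finite B \<and> span2 m B = insert (zv m) B \<and> zv m \<notin> B
     \<and> card (span2 m C) = 2 ^ card C \<and> card (span2 m (C \<union> B)) = 2 ^ card C * (card B + 1)
     \<and> Q \<inter> span2 m (C \<union> B) = span2 m C \<and> q + 1 \<le> (card C + 1) * (card B + 1))"

definition cS :: "nat \<Rightarrow> bool list set \<times> bool list set \<times> nat \<Rightarrow> nat" where
  "cS m s = (case s of (C, B, q) \<Rightarrow> card (span2 m (C \<union> B)))"

lemma subsp_span: assumes Q: "subsp m Q" and X: "X \<subseteq> Q" shows "span2 m X \<subseteq> Q"
  by (rule span_min) (use Q X in \<open>auto simp: subsp_def\<close>)

lemma inv_init: "subsp m Q \<Longrightarrow> ginv m Q ({}, {}, 0)"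
  by (auto simp: ginv_def span_empty subsp_def)

lemma add_C:
  assumes Q: "subsp m Q" and I: "ginv m Q (C, B, q)" and yQ: "y \<in> Q"
    and yS: "y \<notin> span2 m (C \<union> B)" and qq: "q' + 1 \<le> q + 1 + (card B + 1)"
  shows "ginv m Q (insert y C, B, q') \<and> card (span2 m (insert y C \<union> B)) = 2 * card (span2 m (C \<union> B))"
proof -
  have QV: "Q \<subseteq> vecs m" using Q by (simp add: subsp_def)
  have Qc: "\<And>a b. a \<in> Q \<Longrightarrow> b \<in> Q \<Longrightarrow> vxor a b \<in> Q" using Q by (simp add: subsp_def)
  have CQ: "C \<subseteq> Q" and fC: "finite C" and BV: "B \<subseteq> vecs m" and fB: "finite B"
    and sB: "span2 m B = insert (zv m) B" and zB: "zv m \<notin> B"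
    and cC: "card (span2 m C) = 2 ^ card C" and cS: "card (span2 m (C \<union> B)) = 2 ^ card C * (card B + 1)"
    and QS: "Q \<inter> span2 m (C \<union> B) = span2 m C" and qb: "q + 1 \<le> (card C + 1) * (card B + 1)"
    using I by (auto simp: ginv_def)
  have CV: "C \<subseteq> vecs m" using CQ QV by auto
  have CBV: "C \<union> B \<subseteq> vecs m" using CV BV by auto
  have ly: "length y = m" using yQ QV by auto
  have yC: "y \<notin> C" using yS span_base[OF CBV] by auto
  have cardC: "card (insert y C) = card C + 1" using yC fC by simp
  have e1: "insert y C \<union> B = insert y (C \<union> B)" by auto
  have c1: "card (span2 m (insert y C \<union> B)) = 2 * card (span2 m (C \<union> B))"
    unfolding e1 by (rule card_span_insert[OF CBV ly yS])
  have ySC: "y \<notin> span2 m C" using yS span_mono[of C "C \<union> B" m] by auto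
  have c2: "card (span2 m (insert y C)) = 2 * card (span2 m C)"
    by (rule card_span_insert[OF CV ly ySC])
  have SV: "span2 m (C \<union> B) \<subseteq> vecs m" using span_vecs[OF CBV] .
  have QS': "Q \<inter> span2 m (insert y C \<union> B) = span2 m (insert y C)"
  proof
    show "span2 m (insert y C) \<subseteq> Q \<inter> span2 m (insert y C \<union> B)"
      using subsp_span[OF Q, of "insert y C"] CQ yQ span_mono[of "insert y C" "insert y C \<union> B" m]
      by auto
    show "Q \<inter> span2 m (insert y C \<union> B) \<subseteq> span2 m (insert y C)"
    proof
      fix z assume z: "z \<in> Q \<inter> span2 m (insert y C \<union> B)"
      then have "z \<in> span2 m (C \<union> B) \<union> vxor y ` span2 m (C \<union> B)"
        using span_insert[OF CBV] ly e1 by auto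
      then show "z \<in> span2 m (insert y C)"
      proof
        assume "z \<in> span2 m (C \<union> B)"
        then have "z \<in> span2 m C" using QS z by auto
        then show ?thesis using span_mono[of C "insert y C" m] by auto
      next
        assume "z \<in> vxor y ` span2 m (C \<union> B)"
        then obtain s where s: "s \<in> span2 m (C \<union> B)" "z = vxor y s" by auto
        have "length s = m" using s SV by auto
        then have "vxor y z = s" using s ly by (simp add: vxor_cancel)
        then have "s \<in> Q" using Qc[OF yQ] z by auto
        then have "s \<in> span2 m C" using QS s by auto
        then have "s \<in> span2 m (insert y C)" using span_mono[of C "insert y C" m] by auto
        then show ?thesis using s by (auto intro: span2.add)
      qed
    qed
  qed
  have "q' + 1 \<le> (card (insert y C) + 1) * (card B + 1)" using qq qb cardC by simp
  then have "ginv m Q (insert y C, B, q')"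
    using CQ yQ fC BV fB sB zB cC c1 c2 cS cardC QS' by (simp add: ginv_def)
  then show ?thesis using c1 by simp
qed


lemma inv_parts:
  assumes "ginv m Q (C, B, q)" "subsp m Q"
  shows "C \<subseteq> Q" "finite C" "B \<subseteq> vecs m" "finite B" "span2 m B = insert (zv m) B" "zv m \<notin> B"
    "card (span2 m C) = 2 ^ card C" "card (span2 m (C \<union> B)) = 2 ^ card C * (card B + 1)"
    "Q \<inter> span2 m (C \<union> B) = span2 m C" "q + 1 \<le> (card C + 1) * (card B + 1)"
    "C \<union> B \<subseteq> vecs m" "span2 m (C \<union> B) \<subseteq> vecs m"
proof -
  show C: "C \<subseteq> Q" "finite C" "B \<subseteq> vecs m" "finite B" "span2 m B = insert (zv m) B" "zv m \<notin> B"
    "card (span2 m C) = 2 ^ card C" "card (span2 m (C \<union> B)) = 2 ^ card C * (card B + 1)"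
    "Q \<inter> span2 m (C \<union> B) = span2 m C" "q + 1 \<le> (card C + 1) * (card B + 1)"
    using assms by (auto simp: ginv_def)
  show "C \<union> B \<subseteq> vecs m" using C assms(2) by (auto simp: subsp_def)
  then show "span2 m (C \<union> B) \<subseteq> vecs m" by (rule span_vecs)
qed

lemma step_B_empty:
  assumes Q: "subsp m Q" and I: "ginv m Q (C, {}, q)" and yV: "length y = m" and yQ: "y \<notin> Q"
    and yS: "y \<notin> span2 m (C \<union> {})"
  shows "ginv m Q (C, {y}, q + 1) \<and> card (span2 m (C \<union> {y})) = 2 * card (span2 m (C \<union> {}))"
proof -
  note P = inv_parts[OF I Q]
  have Qc: "\<And>a b. a \<in> Q \<Longrightarrow> b \<in> Q \<Longrightarrow> vxor a b \<in> Q" using Q by (simp add: subsp_def)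
  have CV: "C \<subseteq> vecs m" using P by auto
  have c1: "card (span2 m (C \<union> {y})) = 2 * card (span2 m (C \<union> {}))"
    using card_span_insert[OF CV yV] yS by simp
  have sy: "span2 m {y} = insert (zv m) {y}"
    using span_insert[of "{}" m y] yV span_empty[of m] vxor_zero2[OF yV] by auto
  have zy: "zv m \<noteq> y" using yS span_zero[of m "C \<union> {}"] by auto
  have SV: "span2 m C \<subseteq> vecs m" using span_vecs[OF CV] .
  have QS: "Q \<inter> span2 m (C \<union> {y}) = span2 m C"
  proof
    show "Q \<inter> span2 m (C \<union> {y}) \<subseteq> span2 m C"
    proof
      fix z assume z: "z \<in> Q \<inter> span2 m (C \<union> {y})"
      then have "z \<in> span2 m C \<union> vxor y ` span2 m C"
        using span_insert[OF CV, of y] yV by auto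
      then show "z \<in> span2 m C"
      proof
        assume "z \<in> vxor y ` span2 m C"
        then obtain s where s: "s \<in> span2 m C" "z = vxor y s" by auto
        have "length s = m" using s SV by auto
        then have "vxor z s = y" using s yV by (simp add: vxor_assoc vxor_self vxor_zero2)
        moreover have "s \<in> Q" using s P(9) by auto
        ultimately have "y \<in> Q" using Qc z by force
        then show ?thesis using yQ by simp
      qed simp
    qed
    show "span2 m C \<subseteq> Q \<inter> span2 m (C \<union> {y})"
      using P(9) span_mono[of C "C \<union> {y}" m] by auto
  qed
  have "ginv m Q (C, {y}, q + 1)"
    using P c1 sy zy QS yV by (simp add: ginv_def)
  then show ?thesis using c1 by simp
qed


lemma step_none:
  assumes Q: "subsp m Q" and I: "ginv m Q (C, B, q)" and yV: "length y = m" and yQ: "y \<notin> Q"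
    and yS: "y \<notin> span2 m (C \<union> B)" and sQ: "\<forall>s\<in>B. vxor s y \<notin> Q"
  defines "B' \<equiv> B \<union> insert y ((\<lambda>s. vxor s y) ` B)"
  shows "ginv m Q (C, B', q + 1 + card B) \<and> card (span2 m (C \<union> B')) = 2 * card (span2 m (C \<union> B))"
proof -
  note P = inv_parts[OF I Q]
  have Qc: "\<And>a b. a \<in> Q \<Longrightarrow> b \<in> Q \<Longrightarrow> vxor a b \<in> Q" using Q by (simp add: subsp_def)
  have QV: "Q \<subseteq> vecs m" using Q by (simp add: subsp_def)
  have CV: "C \<subseteq> vecs m" and BV: "B \<subseteq> vecs m" and CBV: "C \<union> B \<subseteq> vecs m" using P by auto
  have ySB: "y \<notin> span2 m B" using yS span_mono[of B "C \<union> B" m] by auto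
  have spB: "span2 m (insert y B) = insert (zv m) B'"
  proof -
    have "span2 m (insert y B) = insert (zv m) B \<union> vxor y ` insert (zv m) B"
      using span_insert[OF BV, of y] yV P(5) by simp
    also have "\<dots> = insert (zv m) B'"
      using vxor_zero2[OF yV] unfolding B'_def by (auto simp: vxor_comm)
    finally show ?thesis .
  qed
  have B'sub: "B' \<subseteq> span2 m (insert y B)" using spB by auto
  have iB: "insert y B \<subseteq> B'" unfolding B'_def by auto
  have iBV: "insert y B \<subseteq> vecs m" using BV yV by auto
  have spB': "span2 m B' = span2 m (insert y B)"
    using span_sub[OF iBV B'sub] span_mono[OF iB] by auto
  have B'V: "B' \<subseteq> vecs m" using B'sub span_vecs[OF iBV] by auto
  have zB': "zv m \<notin> B'"
  proof
    assume "zv m \<in> B'"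
    moreover have zy: "zv m \<noteq> y" using yS span_zero[of m "C \<union> B"] by auto
    moreover have nz: "vxor s y \<noteq> zv m" if s: "s \<in> B" for s
    proof
      assume e: "vxor s y = zv m"
      have ls: "length s = m" using s BV by auto
      have "y = vxor s (vxor s y)" using ls yV by (simp add: vxor_cancel)
      then have "y = s" using e ls by (simp add: vxor_zero2)
      then show False using s ySB span_base[OF BV] by auto
    qed
    ultimately show False using P(6) unfolding B'_def
      by (metis (no_types, lifting) UnE imageE insertE)
  qed
  have fB': "finite B'" using P(4) unfolding B'_def by simp
  have cB': "card B' + 1 = 2 * (card B + 1)"
  proof -
    have "card (insert (zv m) B') = card (span2 m (insert y B))" using spB by simp
    also have "\<dots> = 2 * card (span2 m B)" by (rule card_span_insert[OF BV yV ySB])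
    also have "\<dots> = 2 * (card B + 1)" using P(5,6,4) by simp
    finally show ?thesis using zB' fB' by simp
  qed
  have e1: "span2 m (C \<union> B') = span2 m (insert y (C \<union> B))"
  proof
    have V: "insert y (C \<union> B) \<subseteq> vecs m" using CBV yV by auto
    have "C \<union> B' \<subseteq> span2 m (insert y (C \<union> B))"
    proof -
      have "C \<subseteq> span2 m (insert y (C \<union> B))" using span_base[OF V] by auto
      moreover have "span2 m (insert y B) \<subseteq> span2 m (insert y (C \<union> B))" by (rule span_mono) auto
      ultimately show ?thesis using B'sub by auto
    qed
    then show "span2 m (C \<union> B') \<subseteq> span2 m (insert y (C \<union> B))" using span_sub[OF V] by auto
    show "span2 m (insert y (C \<union> B)) \<subseteq> span2 m (C \<union> B')" by (rule span_mono) (use iB in auto)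
  qed
  have c1: "card (span2 m (C \<union> B')) = 2 * card (span2 m (C \<union> B))"
    unfolding e1 by (rule card_span_insert[OF CBV yV yS])
  have SV: "span2 m (C \<union> B) \<subseteq> vecs m" using P by auto
  have QS: "Q \<inter> span2 m (C \<union> B') = span2 m C"
  proof
    show "span2 m C \<subseteq> Q \<inter> span2 m (C \<union> B')"
      using P(9) span_mono[of C "C \<union> B'" m] by auto
    show "Q \<inter> span2 m (C \<union> B') \<subseteq> span2 m C"
    proof
      fix z assume z: "z \<in> Q \<inter> span2 m (C \<union> B')"
      then have "z \<in> span2 m (C \<union> B) \<union> vxor y ` span2 m (C \<union> B)"
        using e1 span_insert[OF CBV, of y] yV by auto
      then show "z \<in> span2 m C"
      proof
        assume "z \<in> span2 m (C \<union> B)" then show ?thesis using z P(9) by auto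
      next
        assume "z \<in> vxor y ` span2 m (C \<union> B)"
        then obtain s where s: "s \<in> span2 m (C \<union> B)" "z = vxor y s" by auto
        obtain a b where ab: "a \<in> span2 m C" "b \<in> span2 m B" "s = vxor a b"
          using span_union[OF CV BV s(1)] by auto
        have la: "length a = m" using ab span_vecs[OF CV] by auto
        have lb: "length b = m" using ab span_vecs[OF BV] by auto
        have aQ: "a \<in> Q" using ab P(9) by auto
        have "vxor a z = vxor y b"
        proof -
          have "vxor a z = vxor a (vxor y (vxor a b))" using s ab by simp
          also have "\<dots> = vxor (vxor a y) (vxor a b)" by (simp add: vxor_assoc)
          also have "\<dots> = vxor (vxor y a) (vxor a b)" by (simp add: vxor_comm[of a y])
          also have "\<dots> = vxor y (vxor a (vxor a b))" by (simp add: vxor_assoc)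
          also have "\<dots> = vxor y b" using la lb by (simp add: vxor_cancel)
          finally show ?thesis .
        qed
        moreover have "vxor a z \<in> Q" using Qc aQ z by auto
        ultimately have yb: "vxor y b \<in> Q" by simp
        have "b \<in> insert (zv m) B" using ab P(5) by simp
        then show ?thesis
        proof
          assume "b = zv m" then show ?thesis using yb yQ vxor_zero2[OF yV] by simp
        next
          assume "b \<in> B" then show ?thesis using yb sQ by (simp add: vxor_comm)
        qed
      qed
    qed
  qed
  have "q + 1 + card B + 1 \<le> (card C + 1) * (card B' + 1)" using P(10) cB' by (simp add: algebra_simps)
  moreover have "card (span2 m (C \<union> B')) = 2 ^ card C * (card B' + 1)" using c1 P(8) cB' by simp
  ultimately have "ginv m Q (C, B', q + 1 + card B)"
    using P spB' spB zB' fB' B'V QS by (simp add: ginv_def)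
  then show ?thesis using c1 by simp
qed


lemma step_lemma:
  assumes Q: "subsp m Q" and I: "ginv m Q s" and st: "gpk_step m Q s s'"
  shows "ginv m Q s' \<and> cS m s' = 2 * cS m s"
  using st
proof cases
  case (in_C C B y q)
  then show ?thesis using add_C[OF Q, of C B q y "q + 1"] I by (auto simp: cS_def)
next
  case (B_empty C B y q)
  then show ?thesis using step_B_empty[OF Q, of C q y] I by (auto simp: cS_def)
next
  case (found C B y ss j q)
  note P = inv_parts[OF I[unfolded found(1)] Q]
  let ?s = "ss ! j"
  have sB: "?s \<in> B" using found by auto
  have ly: "length y = m" using found by auto
  have ls: "length ?s = m" using sB P(3) by auto
  have yS: "vxor ?s y \<notin> span2 m (C \<union> B)"
  proof
    assume "vxor ?s y \<in> span2 m (C \<union> B)"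
    moreover have "?s \<in> span2 m (C \<union> B)" using span_base[OF P(11)] sB by auto
    ultimately have "vxor ?s (vxor ?s y) \<in> span2 m (C \<union> B)" using span_closed[OF P(11)] by blast
    then show False using found ls ly by (simp add: vxor_cancel)
  qed
  have "card B = length ss" using found distinct_card by metis
  then have qq: "q + 1 + Suc j + 1 \<le> q + 1 + (card B + 1)" using found by simp
  show ?thesis using add_C[OF Q _ _ yS qq] I found by (auto simp: cS_def)
next
  case (none C B y q)
  then show ?thesis using step_none[OF Q, of C B q y] I by (auto simp: cS_def)
qed

lemma reach_inv: assumes Q: "subsp m Q" and r: "(gpk_step m Q)\<^sup>*\<^sup>* ({}, {}, 0) s"
  shows "ginv m Q s"
  using r
proof (induction rule: rtranclp_induct)
  case base then show ?case by (rule inv_init[OF Q])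
next
  case (step y z) then show ?case using step_lemma[OF Q] by blast
qed

lemma no_inf: assumes Q: "subsp m Q"
  shows "\<not> (\<exists>g. g 0 = ({}, {}, 0) \<and> (\<forall>i. gpk_step m Q (g i) (g (Suc i))))"
proof
  assume "\<exists>g. g 0 = ({}, {}, 0) \<and> (\<forall>i. gpk_step m Q (g i) (g (Suc i)))"
  then obtain g where g0: "g 0 = ({}, {}, 0)" and gs: "\<And>i. gpk_step m Q (g i) (g (Suc i))" by auto
  have h: "ginv m Q (g i) \<and> cS m (g i) = 2 ^ i" for i
  proof (induction i)
    case 0 then show ?case using g0 inv_init[OF Q] by (simp add: cS_def span_empty)
  next
    case (Suc i) then show ?case using step_lemma[OF Q _ gs[of i]] by simp
  qed
  obtain C B q where gm: "g (Suc m) = (C, B, q)" by (cases "g (Suc m)") auto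
  have I: "ginv m Q (C, B, q)" using h gm by metis
  have "span2 m (C \<union> B) \<subseteq> vecs m" using inv_parts(12)[OF I Q] .
  then have "card (span2 m (C \<union> B)) \<le> 2 ^ m" using card_mono[OF vecs_finite] card_vecs by metis
  moreover have "card (span2 m (C \<union> B)) = 2 ^ Suc m" using h[of "Suc m"] gm by (simp add: cS_def)
  ultimately show False by simp
qed

lemma progress: assumes Q: "subsp m Q" and I: "ginv m Q (C, B, q)" and ne: "span2 m (C \<union> B) \<noteq> vecs m"
  shows "\<exists>s'. gpk_step m Q (C, B, q) s'"
proof -
  note P = inv_parts[OF I Q]
  obtain y where y: "y \<in> vecs m - span2 m (C \<union> B)" using P(12) ne by blast
  show ?thesis
  proof (cases "y \<in> Q")
    case True then show ?thesis using gpk_step.in_C[OF ne y True] by blast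
  next
    case yQ: False
    show ?thesis
    proof (cases "B = {}")
      case True then show ?thesis using gpk_step.B_empty[OF ne y yQ True] by blast
    next
      case Bne: False
      obtain ss where ss: "distinct ss" "set ss = B" using finite_distinct_list[OF P(4)] by blast
      show ?thesis
      proof (cases "\<exists>i<length ss. vxor (ss ! i) y \<in> Q")
        case True
        define j where "j = (LEAST i. i < length ss \<and> vxor (ss ! i) y \<in> Q)"
        have j: "j < length ss \<and> vxor (ss ! j) y \<in> Q" unfolding j_def
          using True by (metis (mono_tags, lifting) LeastI)
        have jl: "\<forall>i<j. vxor (ss ! i) y \<notin> Q"
        proof (intro allI impI)
          fix i assume "i < j"
          then have "\<not> (i < length ss \<and> vxor (ss ! i) y \<in> Q)" unfolding j_def by (rule not_less_Least)
          then show "vxor (ss ! i) y \<notin> Q" using \<open>i < j\<close> j by auto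
        qed
        show ?thesis using gpk_step.found[OF ne y yQ Bne ss(1) ss(2) _ jl] j by blast
      next
        case False
        have "\<forall>s\<in>B. vxor s y \<notin> Q" using False ss(2) by (auto simp: in_set_conv_nth)
        then show ?thesis using gpk_step.none[OF ne y yQ Bne] by blast
      qed
    qed
  qed
qed


lemma perp_span: assumes X: "X \<subseteq> vecs m" and y: "length y = m"
  shows "(\<forall>w\<in>span2 m X. \<not> vdot w y) \<longleftrightarrow> (\<forall>w\<in>X. \<not> vdot w y)"
proof
  assume "\<forall>w\<in>span2 m X. \<not> vdot w y" then show "\<forall>w\<in>X. \<not> vdot w y" using span_base[OF X] by auto
next
  assume h: "\<forall>w\<in>X. \<not> vdot w y"
  show "\<forall>w\<in>span2 m X. \<not> vdot w y"
  proof
    fix w assume "w \<in> span2 m X" then show "\<not> vdot w y"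
    proof (induction rule: span2.induct)
      case zero then show ?case by simp
    next
      case (add x v)
      have "length x = m" "length v = m" using add X span_vecs[OF X] by auto
      then show ?case using vdot_lin[of x v y] add h by simp
    qed
  qed
qed

lemma perp_subsp: "subsp m (perp m W)" if "W \<subseteq> vecs m"
  unfolding subsp_def perp_def
proof (intro conjI ballI)
  fix a b assume a: "a \<in> {y \<in> vecs m. \<forall>w\<in>W. \<not> vdot w y}" and b: "b \<in> {y \<in> vecs m. \<forall>w\<in>W. \<not> vdot w y}"
  then show "vxor a b \<in> {y \<in> vecs m. \<forall>w\<in>W. \<not> vdot w y}" using vdot_lin2[of a b] by auto
qed auto

theorem mainTheorem10:
  fixes n m :: nat and f :: "bool list \<Rightarrow> bool list"
  assumes f_range: "\<forall>x\<in>vecs n. f x \<in> vecs m"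
    and fb: "fully_balanced n m f"
  defines "r \<equiv> affine_dim2 m (f ` vecs n)"
    and "Q \<equiv> constant_set n m f"
  shows "\<not> (\<exists>g. g 0 = ({}, {}, 0) \<and> (\<forall>i. gpk_step m Q (g i) (g (Suc i))))
    \<and> (\<forall>C B q. (gpk_step m Q)\<^sup>*\<^sup>* ({}, {}, 0) (C, B, q) \<and> span2 m (C \<union> B) \<noteq> vecs m
          \<longrightarrow> (\<exists>s'. gpk_step m Q (C, B, q) s'))
    \<and> (\<forall>C B q. (gpk_step m Q)\<^sup>*\<^sup>* ({}, {}, 0) (C, B, q) \<and> span2 m (C \<union> B) = vecs m
          \<longrightarrow> card C = m - r \<and> C \<subseteq> Q \<and> lin_indep2 m C \<and> span2 m C = Q
              \<and> card B = 2 ^ r - 1 \<and> q \<le> 2 ^ r * (m - r + 1) - 1)"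
proof -
  define D where "D = {vxor a b | a b. a \<in> f ` vecs n \<and> b \<in> f ` vecs n}"
  have DV: "D \<subseteq> vecs m" using f_range unfolding D_def by auto
  have rD: "r = vdim2 m D" unfolding r_def affine_dim2_def D_def ..
  have QP: "Q = perp m (span2 m D)"
  proof -
    have "y \<in> Q \<longleftrightarrow> y \<in> perp m (span2 m D)" for y
    proof (cases "length y = m")
      case True
      have "(\<forall>w\<in>D. \<not> vdot w y) \<longleftrightarrow> (\<forall>x\<in>vecs n. \<forall>x'\<in>vecs n. vdot (f x) y = vdot (f x') y)"
      proof -
        have lin: "vdot (vxor (f x) (f x')) y = (vdot (f x) y \<noteq> vdot (f x') y)"
          if "x \<in> vecs n" "x' \<in> vecs n" for x x'
          using that f_range vdot_lin by simp
        show ?thesis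
        proof
          assume h: "\<forall>w\<in>D. \<not> vdot w y"
          show "\<forall>x\<in>vecs n. \<forall>x'\<in>vecs n. vdot (f x) y = vdot (f x') y"
          proof (intro ballI)
            fix x x' assume xx: "x \<in> vecs n" "x' \<in> vecs n"
            then have "vxor (f x) (f x') \<in> D" unfolding D_def by blast
            then show "vdot (f x) y = vdot (f x') y" using h lin[OF xx] by auto
          qed
        next
          assume h: "\<forall>x\<in>vecs n. \<forall>x'\<in>vecs n. vdot (f x) y = vdot (f x') y"
          show "\<forall>w\<in>D. \<not> vdot w y"
          proof
            fix w assume "w \<in> D"
            then obtain a b where ab: "a \<in> f ` vecs n" "b \<in> f ` vecs n" "w = vxor a b"
              unfolding D_def by blast
            obtain x where x: "x \<in> vecs n" "a = f x" using ab(1) by auto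
            obtain x' where x': "x' \<in> vecs n" "b = f x'" using ab(2) by auto
            have "vdot w y = (vdot (f x) y \<noteq> vdot (f x') y)" using lin[OF x(1) x'(1)] ab x x' by simp
            moreover have "vdot (f x) y = vdot (f x') y" using h x(1) x'(1) by blast
            ultimately show "\<not> vdot w y" by simp
          qed
        qed
      qed
      note eq = this
      have q1: "y \<in> Q \<longleftrightarrow> (\<forall>x\<in>vecs n. \<forall>x'\<in>vecs n. vdot (f x) y = vdot (f x') y)"
        unfolding Q_def constant_set_def y_constant_def using True by (simp del: mem_vecs add: vecs_def)
      have q2: "y \<in> perp m (span2 m D) \<longleftrightarrow> (\<forall>w\<in>span2 m D. \<not> vdot w y)"
        unfolding perp_def using True by (simp del: mem_vecs add: vecs_def)
      show ?thesis unfolding q1 q2 perp_span[OF DV True] eq ..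
    next
      case False then show ?thesis by (simp add: Q_def constant_set_def perp_def)
    qed
    then show ?thesis by (rule set_eqI)
  qed
  have sQ: "subsp m Q" unfolding QP by (rule perp_subsp[OF span_vecs[OF DV]])
  have QV: "Q \<subseteq> vecs m" using sQ by (simp add: subsp_def)
  have dual: "card (span2 m D) * card Q = 2 ^ m" unfolding QP by (rule duality[OF DV])
  have part3: "card C = m - r \<and> C \<subseteq> Q \<and> lin_indep2 m C \<and> span2 m C = Q
              \<and> card B = 2 ^ r - 1 \<and> q \<le> 2 ^ r * (m - r + 1) - 1"
    if R: "(gpk_step m Q)\<^sup>*\<^sup>* ({}, {}, 0) (C, B, q)" and full: "span2 m (C \<union> B) = vecs m" for C B q
  proof -
    have I: "ginv m Q (C, B, q)" by (rule reach_inv[OF sQ R])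
    note P = inv_parts[OF I sQ]
    have e1: "2 ^ m = 2 ^ card C * (card B + 1)" using P(8) full card_vecs by simp
    have QC: "Q = span2 m C" using P(9) full QV by auto
    have cQ: "card Q = 2 ^ card C" using QC P(7) by simp
    have "card (span2 m D) * 2 ^ card C = (card B + 1) * 2 ^ card C" using dual cQ e1 by (simp add: mult.commute)
    then have cD: "card (span2 m D) = card B + 1" by (simp only: mult_cancel2) simp
    have "(2::nat) ^ card C * 1 \<le> 2 ^ card C * (card B + 1)" by (rule mult_le_mono2) simp
    then have "(2::nat) ^ card C \<le> 2 ^ m" using e1 by simp
    then have cm: "card C \<le> m" using power_le_imp_le_exp[of 2] by simp
    then have "(2::nat) ^ m = 2 ^ card C * 2 ^ (m - card C)" by (simp flip: power_add)
    then have "(2::nat) ^ card C * 2 ^ (m - card C) = 2 ^ card C * (card B + 1)" using e1 by simp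
    then have bb: "card B + 1 = 2 ^ (m - card C)" by (simp only: mult_cancel1) simp
    then have cD': "card (span2 m D) = 2 ^ (m - card C)" using cD by simp
    have rr: "r = m - card C" using rD vdim2_eq[OF DV cD'] by simp
    have c1: "card C = m - r" using rr cm by simp
    have br: "card B + 1 = 2 ^ r" using bb rr by simp
    have c2: "card B = 2 ^ r - 1" using br by simp
    have "q + 1 \<le> (card C + 1) * 2 ^ r" using P(10) by (simp only: br)
    moreover have "(card C + 1) * 2 ^ r = 2 ^ r * (m - r + 1)" using c1 by (simp add: mult.commute)
    ultimately have "q + 1 \<le> 2 ^ r * (m - r + 1)" by (simp only:)
    then have c3: "q \<le> 2 ^ r * (m - r + 1) - 1" by linarith
    have li: "lin_indep2 m C" using indep_of_card[OF P(2) _ P(7)] P(1) QV by auto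
    show ?thesis using c1 c2 c3 li P(1) QC by simp
  qed
  show ?thesis
  proof (intro conjI)
    show "\<not> (\<exists>g. g 0 = ({}, {}, 0) \<and> (\<forall>i. gpk_step m Q (g i) (g (Suc i))))" by (rule no_inf[OF sQ])
    show "\<forall>C B q. (gpk_step m Q)\<^sup>*\<^sup>* ({}, {}, 0) (C, B, q) \<and> span2 m (C \<union> B) \<noteq> vecs m
          \<longrightarrow> (\<exists>s'. gpk_step m Q (C, B, q) s')"
    proof (intro allI impI)
      fix C B q assume h: "(gpk_step m Q)\<^sup>*\<^sup>* ({}, {}, 0) (C, B, q) \<and> span2 m (C \<union> B) \<noteq> vecs m"
      have I: "ginv m Q (C, B, q)" using reach_inv[OF sQ] h by blast
      show "\<exists>s'. gpk_step m Q (C, B, q) s'" using progress[OF sQ I] h by blast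
    qed
    show "\<forall>C B q. (gpk_step m Q)\<^sup>*\<^sup>* ({}, {}, 0) (C, B, q) \<and> span2 m (C \<union> B) = vecs m
          \<longrightarrow> card C = m - r \<and> C \<subseteq> Q \<and> lin_indep2 m C \<and> span2 m C = Q
              \<and> card B = 2 ^ r - 1 \<and> q \<le> 2 ^ r * (m - r + 1) - 1"
    proof (intro allI impI)
      fix C B q assume h: "(gpk_step m Q)\<^sup>*\<^sup>* ({}, {}, 0) (C, B, q) \<and> span2 m (C \<union> B) = vecs m"
      show "card C = m - r \<and> C \<subseteq> Q \<and> lin_indep2 m C \<and> span2 m C = Q
              \<and> card B = 2 ^ r - 1 \<and> q \<le> 2 ^ r * (m - r + 1) - 1"
        using part3[of C B q] h by blast
    qed
  qed
qed

end
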